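(* For any sequence of instances $\{\mathcal{I}_N\}$ of the non-binary voting game there exists a sequence of regular strategy profiles $\{\Sigma'_N\}_{N\ge1}$ ($\Sigma'_N$ a profile in $\mathcal{I}_N$) such that $\lim_{N\to\infty}A(\Sigma'_N)=1$.
   Context: Non-binary voting game. $N$ agents each vote for $\mathbf{A}$ or $\mathbf{R}$. World state $W\in\{1,\dots,\mathcal{W}\}$ (unobserved), prior $P_w>0$. Conditional on $W$, each agent independently receives a signal $S_n\in\{1,\dots,M\}$ with $P_{mw}=\Pr[S_n=m\mid W=w]$; stochastic dominance: for $w_1>w_2$ and $m\in\{2,\dots,M\}$, $\Pr[S_n\ge m\mid W=w_1]>\Pr[S_n\ge m\mid W=w_2]$. Threshold $\mu\in(0,1)$: $\mathbf{A}$ wins iff at least $\mu N$ agents vote $\mathbf{A}$, else $\mathbf{R}$. Agent $n$ has utility $v_n:\{1,\dots,\mathcal{W}\}\times\{\mathbf{A},\mathbf{R}\}\to\{0,\dots,B\}$ with $v_n(w,\mathbf{A})$ strictly increasing, $v_n(w,\mathbf{R})$ strictly decreasing in $w$, and $v_n(w,\mathbf{A})\ne v_n(w,\mathbf{R})$. Constants $\alpha^{\mathbf{A}}_w,\alpha^{\mathbf{R}}_w=1-\alpha^{\mathbf{A}}_w$ independent of $N$: exactly $\lfloor\alpha^{\mathbf{R}}_wN\rfloor$ agents prefer $\mathbf{R}$ in state $w$; $\alpha^{\mathbf{A}}_w\ne\mu$ and rounding does not flip the comparison with $\mu$. Informed majority decision in state $w$: $\mathbf{A}$ if $\alpha^{\mathbf{A}}_w>\mu$,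 else $\mathbf{R}$. $\mathcal{L}=\{w:\alpha^{\mathbf{A}}_w<\mu\}$, $\mathcal{H}=\{w:\alpha^{\mathbf{A}}_w>\mu\}$, both nonempty. For agent $n$, $\mathcal{L}_n=\{w:v_n(w,\mathbf{R})>v_n(w,\mathbf{A})\}$, $\mathcal{H}_n=\{w:v_n(w,\mathbf{A})>v_n(w,\mathbf{R})\}$; $n$ is friendly if $\mathcal{L}\cap\mathcal{H}_n\ne\emptyset$, unfriendly if $\mathcal{H}\cap\mathcal{L}_n\ne\emptyset$, contingent if $\mathcal{L}_n=\mathcal{L}$. A sequence of instances: $\mathcal{I}_N$ has $N$ agents, all sharing $\mu$, $(P_w)$, $(P_{mw})$, $(\alpha^{\mathbf{A}}_w,\alpha^{\mathbf{R}}_w)$; utilities arbitrary. Strategy $\sigma=(\beta_1,\dots,\beta_M)$, $\beta_m$ = probability of voting $\mathbf{A}$ on signal $m$. Regular profile: friendly agents always vote $\mathbf{A}$, unfriendly agents always vote $\mathbf{R}$. Fidelity $A(\Sigma)=\sum_{w\in\mathcal{L}}P_w\lambda^{\mathbf{R}}_w(\Sigma)+\sum_{w\in\mathcal{H}}P_w\lambda^{\mathbf{A}}_w(\Sigma)$, with $\lambda^{\mathbf{X}}_w(\Sigma)$ the ex-ante probability that $\mathbf{X}$ wins in state $w$. *)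

theory Defs
  imports Complex_Main
begin

text \<open>Non-binary voting game. States are 1..W, signals 1..M, agents of instance N are 1..N.
  Outcomes: Acc (= A) and Rej (= R).\<close>

datatype outcome = Acc | Rej

text \<open>A strategy is a function from signals to the probability of voting A.\<close>
definition is_strategy :: "nat \<Rightarrow> (nat \<Rightarrow> real) \<Rightarrow> bool" where
  "is_strategy M \<beta> \<longleftrightarrow> (\<forall>m\<in>{1..M}. 0 \<le> \<beta> m \<and> \<beta> m \<le> 1)"

definition vote_A_prob :: "(nat \<Rightarrow> nat \<Rightarrow> real) \<Rightarrow> nat \<Rightarrow> (nat \<Rightarrow> real) \<Rightarrow> nat \<Rightarrow> real" where
  "vote_A_prob Pm M \<beta> w = (\<Sum>m\<in>{1..M}. Pm m w * \<beta> m)"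

text \<open>Ex-ante probability that A wins in state w under profile Sigma (agents 1..N vote
  independently given the state): the set S of A-voters has at least mu*N elements.\<close>
definition lambda_A :: "(nat \<Rightarrow> nat \<Rightarrow> real) \<Rightarrow> nat \<Rightarrow> real \<Rightarrow> nat \<Rightarrow> (nat \<Rightarrow> nat \<Rightarrow> real) \<Rightarrow> nat \<Rightarrow> real" where
  "lambda_A Pm M \<mu> N \<Sigma> w =
     (\<Sum>S\<in>{S. S \<subseteq> {1..N} \<and> \<mu> * real N \<le> real (card S)}.
        (\<Prod>n\<in>S. vote_A_prob Pm M (\<Sigma> n) w) *
        (\<Prod>n\<in>{1..N} - S. 1 - vote_A_prob Pm M (\<Sigma> n) w))"

definition lambda_R :: "(nat \<Rightarrow> nat \<Rightarrow> real) \<Rightarrow> nat \<Rightarrow> real \<Rightarrow> nat \<Rightarrow> (nat \<Rightarrow> nat \<Rightarrow> real) \<Rightarrow> nat \<Rightarrow> real" where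
  "lambda_R Pm M \<mu> N \<Sigma> w = 1 - lambda_A Pm M \<mu> N \<Sigma> w"

definition low_states :: "nat \<Rightarrow> real \<Rightarrow> (nat \<Rightarrow> real) \<Rightarrow> nat set" where
  "low_states W \<mu> \<alpha>A = {w\<in>{1..W}. \<alpha>A w < \<mu>}"

definition high_states :: "nat \<Rightarrow> real \<Rightarrow> (nat \<Rightarrow> real) \<Rightarrow> nat set" where
  "high_states W \<mu> \<alpha>A = {w\<in>{1..W}. \<alpha>A w > \<mu>}"

definition fidelity ::
  "nat \<Rightarrow> (nat \<Rightarrow> real) \<Rightarrow> (nat \<Rightarrow> nat \<Rightarrow> real) \<Rightarrow> nat \<Rightarrow> real \<Rightarrow> (nat \<Rightarrow> real)
   \<Rightarrow> nat \<Rightarrow> (nat \<Rightarrow> nat \<Rightarrow> real) \<Rightarrow> real" where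
  "fidelity W P Pm M \<mu> \<alpha>A N \<Sigma> =
     (\<Sum>w\<in>low_states W \<mu> \<alpha>A. P w * lambda_R Pm M \<mu> N \<Sigma> w) +
     (\<Sum>w\<in>high_states W \<mu> \<alpha>A. P w * lambda_A Pm M \<mu> N \<Sigma> w)"

definition friendly :: "nat \<Rightarrow> real \<Rightarrow> (nat \<Rightarrow> real) \<Rightarrow> (nat \<Rightarrow> nat \<Rightarrow> outcome \<Rightarrow> nat) \<Rightarrow> nat \<Rightarrow> bool" where
  "friendly W \<mu> \<alpha>A v n \<longleftrightarrow> (\<exists>w\<in>low_states W \<mu> \<alpha>A. v n w Acc > v n w Rej)"

definition unfriendly :: "nat \<Rightarrow> real \<Rightarrow> (nat \<Rightarrow> real) \<Rightarrow> (nat \<Rightarrow> nat \<Rightarrow> outcome \<Rightarrow> nat) \<Rightarrow> nat \<Rightarrow> bool" where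
  "unfriendly W \<mu> \<alpha>A v n \<longleftrightarrow> (\<exists>w\<in>high_states W \<mu> \<alpha>A. v n w Rej > v n w Acc)"

definition regular_profile ::
  "nat \<Rightarrow> nat \<Rightarrow> real \<Rightarrow> (nat \<Rightarrow> real) \<Rightarrow> nat \<Rightarrow> (nat \<Rightarrow> nat \<Rightarrow> outcome \<Rightarrow> nat)
   \<Rightarrow> (nat \<Rightarrow> nat \<Rightarrow> real) \<Rightarrow> bool" where
  "regular_profile W M \<mu> \<alpha>A N v \<Sigma> \<longleftrightarrow>
     (\<forall>n\<in>{1..N}. is_strategy M (\<Sigma> n)) \<and>
     (\<forall>n\<in>{1..N}. friendly W \<mu> \<alpha>A v n \<longrightarrow> (\<forall>m\<in>{1..M}. \<Sigma> n m = 1)) \<and>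
     (\<forall>n\<in>{1..N}. unfriendly W \<mu> \<alpha>A v n \<longrightarrow> (\<forall>m\<in>{1..M}. \<Sigma> n m = 0))"

end

theory Submission
  imports Defs
begin


definition wt :: "(nat \<Rightarrow> real) \<Rightarrow> nat set \<Rightarrow> nat set \<Rightarrow> real" where
  "wt p I S = (\<Prod>n\<in>S. p n) * (\<Prod>n\<in>I - S. 1 - p n)"

lemma wt_out:
  assumes "finite I" "x \<notin> I" "S \<subseteq> I"
  shows "wt p (insert x I) S = (1 - p x) * wt p I S"
proof -
  have "insert x I - S = insert x (I - S)" using assms by auto
  then show ?thesis using assms unfolding wt_def by (simp add: algebra_simps)
qed

lemma wt_in:
  assumes "finite I" "x \<notin> I" "S \<subseteq> I"
  shows "wt p (insert x I) (insert x S) = p x * wt p I S"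
proof -
  have "insert x I - insert x S = I - S" using assms by auto
  moreover have "finite S" using assms finite_subset by blast
  moreover have "x \<notin> S" using assms by auto
  ultimately show ?thesis using assms unfolding wt_def by (simp add: algebra_simps)
qed

lemma wt_step:
  fixes g :: "nat \<Rightarrow> real"
  assumes "finite I" "x \<notin> I"
  shows "(\<Sum>S\<in>Pow (insert x I). wt p (insert x I) S * g (card S)) =
         (\<Sum>S\<in>Pow I. wt p I S * (p x * g (Suc (card S)) + (1 - p x) * g (card S)))"
proof -
  have disj: "Pow I \<inter> insert x ` Pow I = {}" using assms by auto
  have inj: "inj_on (insert x) (Pow I)"
  proof (rule inj_onI)
    fix A B assume "A \<in> Pow I" "B \<in> Pow I" "insert x A = insert x B"
    then show "A = B" using assms by (metis PowD in_mono insert_ident)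
  qed
  have fin: "finite (Pow I)" "finite (insert x ` Pow I)" using assms by auto
  have "(\<Sum>S\<in>Pow (insert x I). wt p (insert x I) S * g (card S)) =
        (\<Sum>S\<in>Pow I. wt p (insert x I) S * g (card S)) +
        (\<Sum>S\<in>insert x ` Pow I. wt p (insert x I) S * g (card S))"
    unfolding Pow_insert by (rule sum.union_disjoint[OF fin disj])
  also have "(\<Sum>S\<in>insert x ` Pow I. wt p (insert x I) S * g (card S)) =
        (\<Sum>S\<in>Pow I. wt p (insert x I) (insert x S) * g (card (insert x S)))"
    by (rule sum.reindex_cong[OF inj]) auto
  also have "\<dots> = (\<Sum>S\<in>Pow I. wt p I S * (p x * g (Suc (card S))))"
  proof (rule sum.cong)
    fix S assume "S \<in> Pow I"
    then have "S \<subseteq> I" "finite S" "x \<notin> S" using assms finite_subset by auto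
    then show "wt p (insert x I) (insert x S) * g (card (insert x S)) = wt p I S * (p x * g (Suc (card S)))"
      using wt_in[OF assms] by simp
  qed simp
  also have "(\<Sum>S\<in>Pow I. wt p (insert x I) S * g (card S)) = (\<Sum>S\<in>Pow I. wt p I S * ((1 - p x) * g (card S)))"
    by (rule sum.cong) (use wt_out[OF assms] in auto)
  finally show ?thesis by (simp add: sum.distrib[symmetric] algebra_simps)
qed

lemma E0: "finite I \<Longrightarrow> (\<Sum>S\<in>Pow I. wt p I S) = 1"
proof (induction I rule: finite_induct)
  case empty then show ?case by (simp add: wt_def)
next
  case (insert x I)
  have "(\<Sum>S\<in>Pow (insert x I). wt p (insert x I) S) = (\<Sum>S\<in>Pow (insert x I). wt p (insert x I) S * (\<lambda>_. 1::real) (card S))" by simp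
  also have "\<dots> = (\<Sum>S\<in>Pow I. wt p I S * (p x * 1 + (1 - p x) * 1))" by (rule wt_step[OF insert(1,2)])
  also have "\<dots> = (\<Sum>S\<in>Pow I. wt p I S)" by simp
  finally show ?case using insert by simp
qed

lemma E1: "finite I \<Longrightarrow> (\<Sum>S\<in>Pow I. wt p I S * real (card S)) = sum p I"
proof (induction I rule: finite_induct)
  case empty then show ?case by (simp add: wt_def)
next
  case (insert x I)
  have "(\<Sum>S\<in>Pow (insert x I). wt p (insert x I) S * real (card S)) = (\<Sum>S\<in>Pow I. wt p I S * (p x * real (Suc (card S)) + (1 - p x) * real (card S)))"
    using wt_step[OF insert(1,2), of p "\<lambda>k. real k"] by simp
  also have "\<dots> = (\<Sum>S\<in>Pow I. wt p I S * real (card S)) + p x * (\<Sum>S\<in>Pow I. wt p I S)"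
    by (simp add: algebra_simps sum.distrib sum_distrib_left)
  finally show ?case using insert E0 by simp
qed

lemma E2: "finite I \<Longrightarrow> (\<Sum>S\<in>Pow I. wt p I S * (real (card S))^2) = (sum p I)^2 + (\<Sum>n\<in>I. p n * (1 - p n))"
proof (induction I rule: finite_induct)
  case empty then show ?case by (simp add: wt_def)
next
  case (insert x I)
  have "(\<Sum>S\<in>Pow (insert x I). wt p (insert x I) S * (real (card S))^2) = (\<Sum>S\<in>Pow I. wt p I S * (p x * (real (Suc (card S)))^2 + (1 - p x) * (real (card S))^2))"
    using wt_step[OF insert(1,2), of p "\<lambda>k. (real k)^2"] by simp
  also have "\<dots> = (\<Sum>S\<in>Pow I. wt p I S * (real (card S))^2) + 2 * p x * (\<Sum>S\<in>Pow I. wt p I S * real (card S)) + p x * (\<Sum>S\<in>Pow I. wt p I S)"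
    by (simp add: algebra_simps sum.distrib sum_distrib_left power2_eq_square)
  finally show ?case using insert E0 E1 by (simp add: power2_eq_square algebra_simps)
qed

lemma wt_nonneg: "finite I \<Longrightarrow> S \<subseteq> I \<Longrightarrow> \<forall>n\<in>I. 0 \<le> p n \<and> p n \<le> 1 \<Longrightarrow> 0 \<le> wt p I S"
  unfolding wt_def by (intro mult_nonneg_nonneg prod_nonneg) auto

lemma Var: "finite I \<Longrightarrow> (\<Sum>S\<in>Pow I. wt p I S * (real (card S) - sum p I)^2) = (\<Sum>n\<in>I. p n * (1 - p n))"
proof -
  assume f: "finite I"
  have "(\<Sum>S\<in>Pow I. wt p I S * (real (card S) - sum p I)^2) =
     (\<Sum>S\<in>Pow I. wt p I S * (real (card S))^2) - 2 * sum p I * (\<Sum>S\<in>Pow I. wt p I S * real (card S)) + (sum p I)^2 * (\<Sum>S\<in>Pow I. wt p I S)"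
  proof -
    have "(\<Sum>S\<in>Pow I. wt p I S * (real (card S) - sum p I)^2) =
      (\<Sum>S\<in>Pow I. wt p I S * (real (card S))^2 - 2 * sum p I * (wt p I S * real (card S)) + (sum p I)^2 * wt p I S)"
      by (rule sum.cong) (simp_all add: power2_diff algebra_simps)
    also have "\<dots> = (\<Sum>S\<in>Pow I. wt p I S * (real (card S))^2) - (\<Sum>S\<in>Pow I. 2 * sum p I * (wt p I S * real (card S))) + (\<Sum>S\<in>Pow I. (sum p I)^2 * wt p I S)"
      by (simp only: sum.distrib sum_subtractf)
    finally show ?thesis by (simp only: sum_distrib_left[symmetric])
  qed
  then show ?thesis using E0[OF f] E1[OF f] E2[OF f] by (simp add: power2_eq_square)
qed

lemma cheb:
  assumes f: "finite I" and p: "\<forall>n\<in>I. 0 \<le> p n \<and> p n \<le> 1" and T: "T \<subseteq> Pow I"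
    and t: "t > 0" and far: "\<forall>S\<in>T. t \<le> \<bar>real (card S) - sum p I\<bar>"
  shows "(\<Sum>S\<in>T. wt p I S) \<le> real (card I) / t^2"
proof -
  have finT: "finite T" using f T finite_subset by blast
  have "(\<Sum>S\<in>T. wt p I S) \<le> (\<Sum>S\<in>T. wt p I S * (real (card S) - sum p I)^2 / t^2)"
  proof (rule sum_mono)
    fix S assume S: "S \<in> T"
    have w: "0 \<le> wt p I S" using wt_nonneg[OF f _ p] S T by auto
    have "t^2 \<le> \<bar>real (card S) - sum p I\<bar>^2" using far S t
      by (intro power_mono) auto
    then have "t^2 \<le> (real (card S) - sum p I)^2" by simp
    then have "wt p I S * t^2 \<le> wt p I S * (real (card S) - sum p I)^2"
      using w by (rule mult_left_mono)
    moreover have "t^2 > 0" using t by simp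
    ultimately show "wt p I S \<le> wt p I S * (real (card S) - sum p I)^2 / t^2"
      by (simp add: pos_le_divide_eq)
  qed
  also have "\<dots> = (\<Sum>S\<in>T. wt p I S * (real (card S) - sum p I)^2) / t^2"
    by (simp add: sum_divide_distrib)
  also have "\<dots> \<le> (\<Sum>S\<in>Pow I. wt p I S * (real (card S) - sum p I)^2) / t^2"
  proof (rule divide_right_mono)
    show "(\<Sum>S\<in>T. wt p I S * (real (card S) - sum p I)^2) \<le> (\<Sum>S\<in>Pow I. wt p I S * (real (card S) - sum p I)^2)"
    proof (rule sum_mono2)
      show "finite (Pow I)" using f by simp
      show "T \<subseteq> Pow I" by (rule T)
      fix S assume "S \<in> Pow I - T"
      then have "0 \<le> wt p I S" using wt_nonneg[OF f _ p, of S] by simp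
      then show "0 \<le> wt p I S * (real (card S) - sum p I)^2" by simp
    qed
  qed simp
  also have "\<dots> = (\<Sum>n\<in>I. p n * (1 - p n)) / t^2" using Var[OF f] by simp
  also have "\<dots> \<le> real (card I) / t^2"
  proof -
    have "(\<Sum>n\<in>I. p n * (1 - p n)) \<le> (\<Sum>n\<in>I. 1)"
      by (rule sum_mono) (use p in \<open>auto intro: mult_le_one\<close>)
    then show ?thesis by (intro divide_right_mono) auto
  qed
  finally show ?thesis .
qed


lemma tail_low:
  assumes f: "finite I" and p: "\<forall>n\<in>I. 0 \<le> p n \<and> p n \<le> 1" and t: "t > 0"
    and m: "sum p I \<le> c - t"
  shows "0 \<le> (\<Sum>S\<in>{S. S \<subseteq> I \<and> c \<le> real (card S)}. wt p I S) \<and>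
         (\<Sum>S\<in>{S. S \<subseteq> I \<and> c \<le> real (card S)}. wt p I S) \<le> real (card I) / t^2"
proof
  show "0 \<le> (\<Sum>S\<in>{S. S \<subseteq> I \<and> c \<le> real (card S)}. wt p I S)"
    by (rule sum_nonneg) (use wt_nonneg[OF f _ p] in blast)
  show "(\<Sum>S\<in>{S. S \<subseteq> I \<and> c \<le> real (card S)}. wt p I S) \<le> real (card I) / t^2"
  proof (rule cheb[OF f p _ t])
    show "{S. S \<subseteq> I \<and> c \<le> real (card S)} \<subseteq> Pow I" by auto
    show "\<forall>S\<in>{S. S \<subseteq> I \<and> c \<le> real (card S)}. t \<le> \<bar>real (card S) - sum p I\<bar>"
      using m by auto
  qed
qed

lemma tail_high:
  assumes f: "finite I" and p: "\<forall>n\<in>I. 0 \<le> p n \<and> p n \<le> 1" and t: "t > 0"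
    and m: "c + t \<le> sum p I"
  shows "0 \<le> 1 - (\<Sum>S\<in>{S. S \<subseteq> I \<and> c \<le> real (card S)}. wt p I S) \<and>
         1 - (\<Sum>S\<in>{S. S \<subseteq> I \<and> c \<le> real (card S)}. wt p I S) \<le> real (card I) / t^2"
proof -
  let ?T = "{S. S \<subseteq> I \<and> c \<le> real (card S)}"
  have sub: "?T \<subseteq> Pow I" by auto
  have eq: "Pow I - ?T = {S. S \<subseteq> I \<and> \<not> c \<le> real (card S)}" by auto
  have "1 - (\<Sum>S\<in>?T. wt p I S) = (\<Sum>S\<in>Pow I - ?T. wt p I S)"
    using E0[OF f, of p] sum_diff[OF _ sub, of "wt p I"] f by simp
  also have "\<dots> = (\<Sum>S\<in>{S. S \<subseteq> I \<and> \<not> c \<le> real (card S)}. wt p I S)" using eq by simp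
  finally have e: "1 - (\<Sum>S\<in>?T. wt p I S) = (\<Sum>S\<in>{S. S \<subseteq> I \<and> \<not> c \<le> real (card S)}. wt p I S)" .
  have "0 \<le> (\<Sum>S\<in>{S. S \<subseteq> I \<and> \<not> c \<le> real (card S)}. wt p I S)"
    by (rule sum_nonneg) (use wt_nonneg[OF f _ p] in blast)
  moreover have "(\<Sum>S\<in>{S. S \<subseteq> I \<and> \<not> c \<le> real (card S)}. wt p I S) \<le> real (card I) / t^2"
  proof (rule cheb[OF f p _ t])
    show "{S. S \<subseteq> I \<and> \<not> c \<le> real (card S)} \<subseteq> Pow I" by auto
    show "\<forall>S\<in>{S. S \<subseteq> I \<and> \<not> c \<le> real (card S)}. t \<le> \<bar>real (card S) - sum p I\<bar>"
      using m by auto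
  qed
  ultimately show ?thesis using e by simp
qed

lemma lamA_wt: "lambda_A Pm M \<mu> N \<Sigma> w =
  (\<Sum>S\<in>{S. S \<subseteq> {1..N} \<and> \<mu> * real N \<le> real (card S)}. wt (\<lambda>n. vote_A_prob Pm M (\<Sigma> n) w) {1..N} S)"
  by (simp add: lambda_A_def wt_def)

lemma ind_sum: "finite I \<Longrightarrow> (\<Sum>n\<in>I. if P n then 1 else 0 :: real) = real (card {n\<in>I. P n})"
  by (simp add: sum.If_cases Int_def conj_commute)




theorem theorem6:
  fixes W M :: nat and P :: "nat \<Rightarrow> real" and Pm :: "nat \<Rightarrow> nat \<Rightarrow> real"
    and \<mu> :: real and \<alpha>A :: "nat \<Rightarrow> real"
    and v :: "nat \<Rightarrow> nat \<Rightarrow> nat \<Rightarrow> outcome \<Rightarrow> nat"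
  assumes prior_pos: "\<forall>w\<in>{1..W}. P w > 0"
    and prior_sum: "(\<Sum>w\<in>{1..W}. P w) = 1"
    and M_ge: "M \<ge> 2"
    and sig_nonneg: "\<forall>w\<in>{1..W}. \<forall>m\<in>{1..M}. Pm m w \<ge> 0"
    and sig_sum: "\<forall>w\<in>{1..W}. (\<Sum>m\<in>{1..M}. Pm m w) = 1"
    and dominance: "\<forall>w1\<in>{1..W}. \<forall>w2\<in>{1..W}. w1 > w2 \<longrightarrow>
        (\<forall>m\<in>{2..M}. (\<Sum>k\<in>{m..M}. Pm k w1) > (\<Sum>k\<in>{m..M}. Pm k w2))"
    and mu: "0 < \<mu>" "\<mu> < 1"
    and alpha_range: "\<forall>w\<in>{1..W}. 0 \<le> \<alpha>A w \<and> \<alpha>A w \<le> 1"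
    and alpha_ne: "\<forall>w\<in>{1..W}. \<alpha>A w \<noteq> \<mu>"
    and L_ne: "low_states W \<mu> \<alpha>A \<noteq> {}"
    and H_ne: "high_states W \<mu> \<alpha>A \<noteq> {}"
    and v_A_mono: "\<forall>N n w1 w2. n \<in> {1..N} \<longrightarrow> w1 \<in> {1..W} \<longrightarrow> w2 \<in> {1..W} \<longrightarrow> w1 < w2
        \<longrightarrow> v N n w1 Acc < v N n w2 Acc"
    and v_R_mono: "\<forall>N n w1 w2. n \<in> {1..N} \<longrightarrow> w1 \<in> {1..W} \<longrightarrow> w2 \<in> {1..W} \<longrightarrow> w1 < w2
        \<longrightarrow> v N n w1 Rej > v N n w2 Rej"
    and v_ne: "\<forall>N n w. n \<in> {1..N} \<longrightarrow> w \<in> {1..W} \<longrightarrow> v N n w Acc \<noteq> v N n w Rej"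
    and count_R: "\<forall>N\<ge>1. \<forall>w\<in>{1..W}.
        int (card {n\<in>{1..N}. v N n w Rej > v N n w Acc}) = \<lfloor>(1 - \<alpha>A w) * real N\<rfloor>"
    and no_flip: "\<forall>N\<ge>1. \<forall>w\<in>{1..W}.
        (\<mu> * real N \<le> real N - of_int \<lfloor>(1 - \<alpha>A w) * real N\<rfloor>) \<longleftrightarrow> \<alpha>A w > \<mu>"
  shows "\<exists>\<Sigma> :: nat \<Rightarrow> nat \<Rightarrow> nat \<Rightarrow> real.
           (\<forall>N\<ge>1. regular_profile W M \<mu> \<alpha>A N (v N) (\<Sigma> N)) \<and>
           (\<lambda>N. fidelity W P Pm M \<mu> \<alpha>A N (\<Sigma> N)) \<longlonglongrightarrow> 1"
proof -
  define L where "L = low_states W \<mu> \<alpha>A"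
  define H where "H = high_states W \<mu> \<alpha>A"
  have finL: "finite L" "L \<subseteq> {1..W}" unfolding L_def low_states_def by auto
  have finH: "finite H" "H \<subseteq> {1..W}" unfolding H_def high_states_def by auto
  define wL where "wL = Max L"
  define wH where "wH = Min H"
  have wL: "wL \<in> L" unfolding wL_def using finL L_ne L_def by (intro Max_in) auto
  have wH: "wH \<in> H" unfolding wH_def using finH H_ne H_def by (intro Min_in) auto
  have leL: "\<And>w. w \<in> L \<Longrightarrow> w \<le> wL" unfolding wL_def using finL by simp
  have geH: "\<And>w. w \<in> H \<Longrightarrow> wH \<le> w" unfolding wH_def using finH by simp
  have wLW: "wL \<in> {1..W}" "\<alpha>A wL < \<mu>" using wL unfolding L_def low_states_def by auto
  have wHW: "wH \<in> {1..W}" "\<alpha>A wH > \<mu>" using wH unfolding H_def high_states_def by auto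
  have prefA: "v N n w2 Rej < v N n w2 Acc"
    if "n \<in> {1..N}" "w1 \<in> {1..W}" "w2 \<in> {1..W}" "w1 \<le> w2" "v N n w1 Rej < v N n w1 Acc"
    for N n w1 w2
  proof (cases "w1 = w2")
    case True then show ?thesis using that by simp
  next
    case False
    then have "w1 < w2" using that by simp
    then have "v N n w1 Acc < v N n w2 Acc" "v N n w2 Rej < v N n w1 Rej"
      using v_A_mono v_R_mono that by blast+
    then show ?thesis using that by linarith
  qed
  have prefR: "v N n w1 Acc < v N n w1 Rej"
    if "n \<in> {1..N}" "w1 \<in> {1..W}" "w2 \<in> {1..W}" "w1 \<le> w2" "v N n w2 Acc < v N n w2 Rej"
    for N n w1 w2
  proof (rule ccontr)
    assume "\<not> v N n w1 Acc < v N n w1 Rej"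
    moreover have "v N n w1 Acc \<noteq> v N n w1 Rej" using v_ne that by blast
    ultimately have "v N n w1 Rej < v N n w1 Acc" by simp
    then have "v N n w2 Rej < v N n w2 Acc" using prefA that by blast
    then show False using that by simp
  qed
  define a where "a = \<alpha>A wL"
  define b where "b = \<alpha>A wH"
  have ab: "a < \<mu>" "\<mu> < b" using wLW wHW a_def b_def by auto
  have lt: "wL < wH"
  proof (rule ccontr)
    assume "\<not> wL < wH"
    moreover have "wL \<noteq> wH" using ab a_def b_def by auto
    ultimately have "wH < wL" by simp
    obtain k :: nat where k: "1 < real k * (b - a)" using reals_Archimedean3[of "b - a"] ab by auto
    define N where "N = Suc k"
    have N1: "N \<ge> 1" unfolding N_def by simp
    have Nba: "1 \<le> real N * (b - a)" unfolding N_def using k ab by (simp add: algebra_simps)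
    have sub: "{n\<in>{1..N}. v N n wL Rej > v N n wL Acc} \<subseteq> {n\<in>{1..N}. v N n wH Rej > v N n wH Acc}"
    proof
      fix n assume "n \<in> {n\<in>{1..N}. v N n wL Rej > v N n wL Acc}"
      then have n: "n \<in> {1..N}" "v N n wL Acc < v N n wL Rej" by auto
      have "v N n wH Acc < v N n wH Rej"
        by (rule prefR[OF n(1) wHW(1) wLW(1) _ n(2)]) (use \<open>wH < wL\<close> in simp)
      then show "n \<in> {n\<in>{1..N}. v N n wH Rej > v N n wH Acc}" using n by simp
    qed
    then have "card {n\<in>{1..N}. v N n wL Rej > v N n wL Acc} \<le> card {n\<in>{1..N}. v N n wH Rej > v N n wH Acc}"
      by (intro card_mono) auto
    moreover have "int (card {n\<in>{1..N}. v N n wL Rej > v N n wL Acc}) = \<lfloor>(1 - a) * real N\<rfloor>"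
      using count_R N1 wLW(1) unfolding a_def by blast
    moreover have "int (card {n\<in>{1..N}. v N n wH Rej > v N n wH Acc}) = \<lfloor>(1 - b) * real N\<rfloor>"
      using count_R N1 wHW(1) unfolding b_def by blast
    ultimately have c1: "\<lfloor>(1 - a) * real N\<rfloor> \<le> \<lfloor>(1 - b) * real N\<rfloor>" by linarith
    have "(1 - b) * real N + 1 \<le> (1 - a) * real N" using Nba by (simp add: algebra_simps)
    then have "\<lfloor>(1 - b) * real N + 1\<rfloor> \<le> \<lfloor>(1 - a) * real N\<rfloor>" by (rule floor_mono)
    then show False using c1 by simp
  qed
  have LH: "L \<union> H = {1..W}" "L \<inter> H = {}"
    using alpha_ne unfolding L_def H_def low_states_def high_states_def by (auto simp: linorder_neq_iff)
  have fr_iff: "friendly W \<mu> \<alpha>A (v N) n \<longleftrightarrow> v N n wL Rej < v N n wL Acc" if "n \<in> {1..N}" for N n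
  proof
    assume "friendly W \<mu> \<alpha>A (v N) n"
    then obtain w where w: "w \<in> L" "v N n w Rej < v N n w Acc" unfolding friendly_def L_def by auto
    then show "v N n wL Rej < v N n wL Acc" using prefA[of n N w wL] leL finL wLW that by auto
  next
    assume "v N n wL Rej < v N n wL Acc"
    then show "friendly W \<mu> \<alpha>A (v N) n" unfolding friendly_def using wL L_def by auto
  qed
  have unfr_iff: "unfriendly W \<mu> \<alpha>A (v N) n \<longleftrightarrow> v N n wH Acc < v N n wH Rej" if "n \<in> {1..N}" for N n
  proof
    assume "unfriendly W \<mu> \<alpha>A (v N) n"
    then obtain w where w: "w \<in> H" "v N n w Acc < v N n w Rej" unfolding unfriendly_def H_def by auto
    then show "v N n wH Acc < v N n wH Rej" using prefR[of n N wH w] geH finH wHW that by auto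
  next
    assume "v N n wH Acc < v N n wH Rej"
    then show "unfriendly W \<mu> \<alpha>A (v N) n" unfolding unfriendly_def using wH H_def by auto
  qed
  have excl: "\<not> unfriendly W \<mu> \<alpha>A (v N) n" if "n \<in> {1..N}" "friendly W \<mu> \<alpha>A (v N) n" for N n
  proof -
    have "v N n wL Rej < v N n wL Acc" using fr_iff that by blast
    then have "v N n wH Rej < v N n wH Acc" using prefA[of n N wL wH] lt wLW wHW that by auto
    then show ?thesis using unfr_iff that by auto
  qed
  define \<theta> where "\<theta> = (\<mu> - a) / (b - a)"
  have ba: "b - a > 0" using ab by simp
  have th: "0 < \<theta>" "\<theta> < 1" unfolding \<theta>_def using ab ba by (auto simp: divide_simps)
  have th_eq: "a + (b - a) * \<theta> = \<mu>" unfolding \<theta>_def using ba by simp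
  define G where "G w = (\<Sum>k\<in>{2..M}. Pm k w)" for w
  have split1: "(\<Sum>m\<in>{1..M}. f m) = f 1 + (\<Sum>m\<in>{2..M}. f m)" for f :: "nat \<Rightarrow> real"
  proof -
    have "{1..M} = insert 1 {2..M}" using M_ge by auto
    then show ?thesis by simp
  qed
  have G01: "0 \<le> G w \<and> G w \<le> 1" if "w \<in> {1..W}" for w
  proof -
    have "0 \<le> G w" unfolding G_def using sig_nonneg that by (intro sum_nonneg) auto
    moreover have "Pm 1 w + G w = 1" using sig_sum that split1[of "\<lambda>m. Pm m w"] G_def by simp
    moreover have "0 \<le> Pm 1 w" using sig_nonneg that M_ge by auto
    ultimately show ?thesis by simp
  qed
  have Gmono: "G w1 < G w2" if "w1 \<in> {1..W}" "w2 \<in> {1..W}" "w1 < w2" for w1 w2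
    using dominance that M_ge unfolding G_def by auto
  define g1 where "g1 = G wL"
  define g2 where "g2 = G wH"
  have g12: "g1 < g2" unfolding g1_def g2_def using Gmono lt wLW wHW by blast
  have g01: "0 \<le> g1" "g2 \<le> 1" using G01 wLW wHW g1_def g2_def by auto
  define y where "y = min \<theta> (1 - \<theta>)"
  define x where "x = \<theta> - y * (g1 + g2) / 2"
  have y: "0 < y" "y \<le> \<theta>" "y \<le> 1 - \<theta>" unfolding y_def using th by auto
  have "y * (g1 + g2) \<le> y * 2" using y g01 g12 by (intro mult_left_mono) auto
  then have x0: "0 \<le> x" unfolding x_def using y by linarith
  have "0 \<le> y * (g1 + g2) / 2" using y g01 g12 by simp
  then have xy1: "x + y \<le> 1" unfolding x_def using y by simp
  define \<beta> where "\<beta> m = (if 2 \<le> m then x + y else x)" for m :: nat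
  have qeq: "vote_A_prob Pm M \<beta> w = x + y * G w" if "w \<in> {1..W}" for w
  proof -
    have "vote_A_prob Pm M \<beta> w = Pm 1 w * x + (\<Sum>m\<in>{2..M}. Pm m w * (x + y))"
      unfolding vote_A_prob_def using split1[of "\<lambda>m. Pm m w * \<beta> m"] by (simp add: \<beta>_def)
    also have "\<dots> = x * (Pm 1 w + G w) + y * G w"
      unfolding G_def by (simp add: sum_distrib_left sum.distrib algebra_simps)
    also have "Pm 1 w + G w = 1" using sig_sum that split1[of "\<lambda>m. Pm m w"] G_def by simp
    finally show ?thesis by simp
  qed
  define \<delta> where "\<delta> = y * (g2 - g1) / 2"
  have \<delta>: "0 < \<delta>" unfolding \<delta>_def using y g12 by simp
  have qH: "\<theta> + \<delta> \<le> vote_A_prob Pm M \<beta> w" if "w \<in> H" for w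
  proof -
    have w: "w \<in> {1..W}" using that finH by auto
    have "g2 \<le> G w" using geH[OF that] Gmono[of wH w] w wHW g2_def by (cases "w = wH") auto
    then have "y * g2 \<le> y * G w" using y by simp
    moreover have "y * (g2 - g1) / 2 + y * (g1 + g2) / 2 = y * g2" by (simp add: field_simps)
    moreover have "vote_A_prob Pm M \<beta> w = \<theta> - y * (g1 + g2) / 2 + y * G w" using qeq[OF w] x_def by simp
    ultimately show ?thesis unfolding \<delta>_def by linarith
  qed
  have qL: "vote_A_prob Pm M \<beta> w \<le> \<theta> - \<delta>" if "w \<in> L" for w
  proof -
    have w: "w \<in> {1..W}" using that finL by auto
    have "G w \<le> g1" using leL[OF that] Gmono[of w wL] w wLW g1_def by (cases "w = wL") auto
    then have "y * G w \<le> y * g1" using y by simp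
    moreover have "y * (g1 + g2) / 2 - y * (g2 - g1) / 2 = y * g1" by (simp add: field_simps)
    moreover have "vote_A_prob Pm M \<beta> w = \<theta> - y * (g1 + g2) / 2 + y * G w" using qeq[OF w] x_def by simp
    ultimately show ?thesis unfolding \<delta>_def by linarith
  qed
  have q01: "0 \<le> vote_A_prob Pm M \<beta> w \<and> vote_A_prob Pm M \<beta> w \<le> 1" if "w \<in> {1..W}" for w
  proof -
    have "0 \<le> y * G w" "y * G w \<le> y" using G01[OF that] y by (auto simp: mult_left_le)
    then show ?thesis using qeq[OF that] x0 xy1 by simp
  qed
  have vote1: "vote_A_prob Pm M (\<lambda>m. 1) w = 1" if "w \<in> {1..W}" for w
    using sig_sum that unfolding vote_A_prob_def by simp
  have vote0: "vote_A_prob Pm M (\<lambda>m. 0) w = 0" for w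
    unfolding vote_A_prob_def by simp
  define \<Sigma> where "\<Sigma> N n m = (if friendly W \<mu> \<alpha>A (v N) n then 1 else
      if unfriendly W \<mu> \<alpha>A (v N) n then 0 else \<beta> m)" for N n m :: nat
  have reg: "\<forall>N\<ge>1. regular_profile W M \<mu> \<alpha>A N (v N) (\<Sigma> N)"
  proof (intro allI impI)
    fix N :: nat assume "N \<ge> 1"
    have "\<beta> m \<ge> 0 \<and> \<beta> m \<le> 1" for m using x0 xy1 y unfolding \<beta>_def by auto
    then show "regular_profile W M \<mu> \<alpha>A N (v N) (\<Sigma> N)"
      unfolding regular_profile_def is_strategy_def \<Sigma>_def using excl by auto
  qed
  define \<epsilon> where "\<epsilon> = (b - a) * \<delta>"
  have \<epsilon>: "\<epsilon> > 0" unfolding \<epsilon>_def using ba \<delta> by simp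
  have key: "(\<forall>n\<in>{1..N}. 0 \<le> vote_A_prob Pm M (\<Sigma> N n) w \<and> vote_A_prob Pm M (\<Sigma> N n) w \<le> 1) \<and>
     (w \<in> H \<longrightarrow> \<mu> * real N + \<epsilon> * real N \<le> (\<Sum>n\<in>{1..N}. vote_A_prob Pm M (\<Sigma> N n) w)) \<and>
     (w \<in> L \<longrightarrow> (\<Sum>n\<in>{1..N}. vote_A_prob Pm M (\<Sigma> N n) w) \<le> \<mu> * real N - \<epsilon> * real N + 1)"
    if N1: "N \<ge> 1" and w: "w \<in> {1..W}" for N w
  proof -
    define q where "q = vote_A_prob Pm M \<beta> w"
    have q: "0 \<le> q" "q \<le> 1" using q01[OF w] q_def by auto
    let ?fr = "\<lambda>n. friendly W \<mu> \<alpha>A (v N) n"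
    let ?uf = "\<lambda>n. unfriendly W \<mu> \<alpha>A (v N) n"
    have pn: "vote_A_prob Pm M (\<Sigma> N n) w = (if ?fr n then 1 else 0) * (1 - q) + (if \<not> ?uf n then 1 else 0) * q"
      if n: "n \<in> {1..N}" for n
    proof (cases "?fr n")
      case True
      then have "\<Sigma> N n = (\<lambda>m. 1)" unfolding \<Sigma>_def by (intro ext) simp
      then show ?thesis using True excl[OF n True] vote1[OF w] by simp
    next
      case False
      show ?thesis
      proof (cases "?uf n")
        case True
        then have "\<Sigma> N n = (\<lambda>m. 0)" unfolding \<Sigma>_def using False by (intro ext) simp
        then show ?thesis using True False vote0 by simp
      next
        case True2: False
        then have "\<Sigma> N n = \<beta>" unfolding \<Sigma>_def using False by (intro ext) simp
        then show ?thesis using True2 False q_def by simp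
      qed
    qed
    have p01: "\<forall>n\<in>{1..N}. 0 \<le> vote_A_prob Pm M (\<Sigma> N n) w \<and> vote_A_prob Pm M (\<Sigma> N n) w \<le> 1"
      using pn q excl by auto
    have "(\<Sum>n\<in>{1..N}. vote_A_prob Pm M (\<Sigma> N n) w) =
        (\<Sum>n\<in>{1..N}. (if ?fr n then 1 else 0) * (1 - q) + (if \<not> ?uf n then 1 else 0) * q)"
      using pn by (intro sum.cong) auto
    also have "\<dots> = (\<Sum>n\<in>{1..N}. (if ?fr n then 1 else 0)) * (1 - q) + (\<Sum>n\<in>{1..N}. (if \<not> ?uf n then 1 else 0)) * q"
      by (simp add: sum.distrib sum_distrib_right)
    also have "\<dots> = real (card {n\<in>{1..N}. ?fr n}) * (1 - q) + real (card {n\<in>{1..N}. \<not> ?uf n}) * q"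
      by (simp add: ind_sum)
    finally have sumeq: "(\<Sum>n\<in>{1..N}. vote_A_prob Pm M (\<Sigma> N n) w) =
        real (card {n\<in>{1..N}. ?fr n}) * (1 - q) + real (card {n\<in>{1..N}. \<not> ?uf n}) * q" .
    have e1: "{n\<in>{1..N}. ?fr n} = {1..N} - {n\<in>{1..N}. v N n wL Rej > v N n wL Acc}"
    proof -
      have "?fr n \<longleftrightarrow> \<not> v N n wL Rej > v N n wL Acc" if "n \<in> {1..N}" for n
      proof -
        have ne: "v N n wL Acc \<noteq> v N n wL Rej" using v_ne that wLW(1) by blast
        show ?thesis using fr_iff[OF that] ne by auto
      qed
      then show ?thesis by auto
    qed
    have e2: "{n\<in>{1..N}. \<not> ?uf n} = {1..N} - {n\<in>{1..N}. v N n wH Rej > v N n wH Acc}"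
      using unfr_iff by auto
    have cF: "real (card {n\<in>{1..N}. ?fr n}) = real N - of_int \<lfloor>(1 - a) * real N\<rfloor>"
    proof -
      have "card {n\<in>{1..N}. ?fr n} = N - card {n\<in>{1..N}. v N n wL Rej > v N n wL Acc}"
        unfolding e1 by (subst card_Diff_subset) auto
      moreover have "card {n\<in>{1..N}. v N n wL Rej > v N n wL Acc} \<le> N"
        by (rule order_trans[OF card_mono[of "{1..N}"]]) auto
      ultimately have "real (card {n\<in>{1..N}. ?fr n}) = real N - real (card {n\<in>{1..N}. v N n wL Rej > v N n wL Acc})"
        by simp
      also have "real (card {n\<in>{1..N}. v N n wL Rej > v N n wL Acc}) = of_int \<lfloor>(1 - a) * real N\<rfloor>"
      proof -
        have "int (card {n\<in>{1..N}. v N n wL Rej > v N n wL Acc}) = \<lfloor>(1 - a) * real N\<rfloor>"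
          using count_R N1 wLW(1) unfolding a_def by blast
        then have "real_of_int (int (card {n\<in>{1..N}. v N n wL Rej > v N n wL Acc})) = real_of_int \<lfloor>(1 - a) * real N\<rfloor>"
          by (rule arg_cong)
        then show ?thesis by simp
      qed
      finally show ?thesis .
    qed
    have cU: "real (card {n\<in>{1..N}. \<not> ?uf n}) = real N - of_int \<lfloor>(1 - b) * real N\<rfloor>"
    proof -
      have "card {n\<in>{1..N}. \<not> ?uf n} = N - card {n\<in>{1..N}. v N n wH Rej > v N n wH Acc}"
        unfolding e2 by (subst card_Diff_subset) auto
      moreover have "card {n\<in>{1..N}. v N n wH Rej > v N n wH Acc} \<le> N"
        by (rule order_trans[OF card_mono[of "{1..N}"]]) auto
      ultimately have "real (card {n\<in>{1..N}. \<not> ?uf n}) = real N - real (card {n\<in>{1..N}. v N n wH Rej > v N n wH Acc})"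
        by simp
      also have "real (card {n\<in>{1..N}. v N n wH Rej > v N n wH Acc}) = of_int \<lfloor>(1 - b) * real N\<rfloor>"
      proof -
        have "int (card {n\<in>{1..N}. v N n wH Rej > v N n wH Acc}) = \<lfloor>(1 - b) * real N\<rfloor>"
          using count_R N1 wHW(1) unfolding b_def by blast
        then have "real_of_int (int (card {n\<in>{1..N}. v N n wH Rej > v N n wH Acc})) = real_of_int \<lfloor>(1 - b) * real N\<rfloor>"
          by (rule arg_cong)
        then show ?thesis by simp
      qed
      finally show ?thesis .
    qed
    define F where "F = real (card {n\<in>{1..N}. ?fr n})"
    define U where "U = real (card {n\<in>{1..N}. \<not> ?uf n})"
    have Fb: "a * real N \<le> F" "F \<le> a * real N + 1"
      using cF of_int_floor_le[of "(1 - a) * real N"] real_of_int_floor_add_one_ge[of "(1 - a) * real N"]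
      unfolding F_def by (auto simp: algebra_simps)
    have Ub: "b * real N \<le> U" "U \<le> b * real N + 1"
      using cU of_int_floor_le[of "(1 - b) * real N"] real_of_int_floor_add_one_ge[of "(1 - b) * real N"]
      unfolding U_def by (auto simp: algebra_simps)
    have S: "(\<Sum>n\<in>{1..N}. vote_A_prob Pm M (\<Sigma> N n) w) = F * (1 - q) + U * q"
      using sumeq F_def U_def by simp
    have "a * real N * (1 - q) \<le> F * (1 - q)" using Fb q by (intro mult_right_mono) auto
    moreover have "b * real N * q \<le> U * q" using Ub q by (intro mult_right_mono) auto
    moreover have "F * (1 - q) \<le> (a * real N + 1) * (1 - q)" using Fb q by (intro mult_right_mono) auto
    moreover have "U * q \<le> (b * real N + 1) * q" using Ub q by (intro mult_right_mono) auto
    ultimately have lo: "real N * (a + (b - a) * q) \<le> F * (1 - q) + U * q"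
      and hi: "F * (1 - q) + U * q \<le> real N * (a + (b - a) * q) + 1"
      by (simp_all add: algebra_simps)
    have hH: "\<mu> * real N + \<epsilon> * real N \<le> F * (1 - q) + U * q" if "w \<in> H"
    proof -
      have "(b - a) * (\<theta> + \<delta>) \<le> (b - a) * q" using qH[OF that] q_def ba by (intro mult_left_mono) auto
      then have "real N * (a + (b - a) * (\<theta> + \<delta>)) \<le> real N * (a + (b - a) * q)"
        by (intro mult_left_mono) auto
      moreover have "real N * (a + (b - a) * (\<theta> + \<delta>)) = \<mu> * real N + \<epsilon> * real N"
      proof -
        have "real N * (a + (b - a) * (\<theta> + \<delta>)) = real N * (a + (b - a) * \<theta>) + real N * ((b - a) * \<delta>)"
          by (simp add: algebra_simps)
        then show ?thesis using th_eq unfolding \<epsilon>_def by (simp add: mult.commute)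
      qed
      ultimately show ?thesis using lo by linarith
    qed
    have hL: "F * (1 - q) + U * q \<le> \<mu> * real N - \<epsilon> * real N + 1" if "w \<in> L"
    proof -
      have "(b - a) * q \<le> (b - a) * (\<theta> - \<delta>)" using qL[OF that] q_def ba by (intro mult_left_mono) auto
      then have "real N * (a + (b - a) * q) \<le> real N * (a + (b - a) * (\<theta> - \<delta>))"
        by (intro mult_left_mono) auto
      moreover have "real N * (a + (b - a) * (\<theta> - \<delta>)) = \<mu> * real N - \<epsilon> * real N"
      proof -
        have "real N * (a + (b - a) * (\<theta> - \<delta>)) = real N * (a + (b - a) * \<theta>) - real N * ((b - a) * \<delta>)"
          by (simp add: algebra_simps)
        then show ?thesis using th_eq unfolding \<epsilon>_def by (simp add: mult.commute)
      qed
      ultimately show ?thesis using hi by linarith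
    qed
    show ?thesis using p01 S hH hL by simp
  qed
  have PLH: "(\<Sum>w\<in>L. P w) + (\<Sum>w\<in>H. P w) = 1"
    using prior_sum sum.union_disjoint[OF finL(1) finH(1) LH(2), of P] LH(1) by simp
  have bnd: "1 - 4 / (\<epsilon>^2 * real N) \<le> fidelity W P Pm M \<mu> \<alpha>A N (\<Sigma> N) \<and>
             fidelity W P Pm M \<mu> \<alpha>A N (\<Sigma> N) \<le> 1"
    if N1: "N \<ge> 1" and Ne: "2 \<le> \<epsilon> * real N" for N
  proof -
    define t where "t = \<epsilon> * real N / 2"
    have t: "t > 0" "1 \<le> t" using \<epsilon> N1 Ne unfolding t_def by auto
    define e where "e = 4 / (\<epsilon>^2 * real N)"
    have e: "real (card {1..N}) / t^2 = e" unfolding t_def e_def using N1 \<epsilon>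
      by (simp add: power2_eq_square field_simps)
    define lam where "lam w = lambda_A Pm M \<mu> N (\<Sigma> N) w" for w
    have bL: "0 \<le> lam w \<and> lam w \<le> e" if "w \<in> L" for w
    proof -
      have w: "w \<in> {1..W}" using that finL by auto
      have "(\<Sum>n\<in>{1..N}. vote_A_prob Pm M (\<Sigma> N n) w) \<le> \<mu> * real N - t"
      proof -
        have "(\<Sum>n\<in>{1..N}. vote_A_prob Pm M (\<Sigma> N n) w) \<le> \<mu> * real N - \<epsilon> * real N + 1"
          using key[OF N1 w] that by blast
        moreover have "1 \<le> \<epsilon> * real N - t" using t_def Ne by simp
        ultimately show ?thesis by linarith
      qed
      then show ?thesis using tail_low[OF _ _ t(1), of "{1..N}" "\<lambda>n. vote_A_prob Pm M (\<Sigma> N n) w" "\<mu> * real N"]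
          key[OF N1 w] e unfolding lam_def lamA_wt by auto
    qed
    have bH: "0 \<le> 1 - lam w \<and> 1 - lam w \<le> e" if "w \<in> H" for w
    proof -
      have w: "w \<in> {1..W}" using that finH by auto
      have "\<mu> * real N + t \<le> (\<Sum>n\<in>{1..N}. vote_A_prob Pm M (\<Sigma> N n) w)"
      proof -
        have "\<mu> * real N + \<epsilon> * real N \<le> (\<Sum>n\<in>{1..N}. vote_A_prob Pm M (\<Sigma> N n) w)"
          using key[OF N1 w] that by blast
        moreover have "t \<le> \<epsilon> * real N" using t_def t(1) by simp
        ultimately show ?thesis by linarith
      qed
      then show ?thesis using tail_high[OF _ _ t(1), of "{1..N}" "\<lambda>n. vote_A_prob Pm M (\<Sigma> N n) w" "\<mu> * real N"]
          key[OF N1 w] e unfolding lam_def lamA_wt by auto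
    qed
    have fid: "fidelity W P Pm M \<mu> \<alpha>A N (\<Sigma> N) =
       (\<Sum>w\<in>L. P w) + (\<Sum>w\<in>H. P w) - ((\<Sum>w\<in>L. P w * lam w) + (\<Sum>w\<in>H. P w * (1 - lam w)))"
      unfolding fidelity_def lambda_R_def L_def[symmetric] H_def[symmetric] lam_def
      by (simp add: right_diff_distrib sum_subtractf)
    have Ppos: "w \<in> {1..W} \<Longrightarrow> 0 \<le> P w" for w using prior_pos by (simp add: less_imp_le)
    have s1: "0 \<le> (\<Sum>w\<in>L. P w * lam w)" "(\<Sum>w\<in>L. P w * lam w) \<le> (\<Sum>w\<in>L. P w * e)"
      using bL Ppos finL by (auto intro!: sum_nonneg sum_mono mult_left_mono)
    have s2: "0 \<le> (\<Sum>w\<in>H. P w * (1 - lam w))" "(\<Sum>w\<in>H. P w * (1 - lam w)) \<le> (\<Sum>w\<in>H. P w * e)"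
      using bH Ppos finH by (auto intro!: sum_nonneg sum_mono mult_left_mono)
    have "(\<Sum>w\<in>L. P w * e) + (\<Sum>w\<in>H. P w * e) = e"
      using PLH by (simp flip: sum_distrib_right distrib_right)
    then show ?thesis using fid s1 s2 PLH e_def by linarith
  qed
  have ev: "eventually (\<lambda>N. 1 - 4 / (\<epsilon>^2 * real N) \<le> fidelity W P Pm M \<mu> \<alpha>A N (\<Sigma> N) \<and>
             fidelity W P Pm M \<mu> \<alpha>A N (\<Sigma> N) \<le> 1) sequentially"
  proof -
    obtain k :: nat where k: "2 < real k * \<epsilon>" using reals_Archimedean3[OF \<epsilon>] by auto
    show ?thesis unfolding eventually_sequentially
    proof (intro exI allI impI)
      fix N assume N: "Suc k \<le> N"
      have "real k * \<epsilon> \<le> real N * \<epsilon>" using N \<epsilon> by (intro mult_right_mono) auto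
      then show "1 - 4 / (\<epsilon>^2 * real N) \<le> fidelity W P Pm M \<mu> \<alpha>A N (\<Sigma> N) \<and>
             fidelity W P Pm M \<mu> \<alpha>A N (\<Sigma> N) \<le> 1" using bnd N k by (simp add: mult.commute)
    qed
  qed
  have lim: "(\<lambda>N. 1 - 4 / (\<epsilon>^2 * real N)) \<longlonglongrightarrow> 1"
  proof -
    have "(\<lambda>N. 1 - (4 / \<epsilon>^2) / real N) \<longlonglongrightarrow> 1 - 0"
      by (rule tendsto_diff[OF tendsto_const lim_const_over_n])
    moreover have "(\<lambda>N. 1 - (4 / \<epsilon>^2) / real N) = (\<lambda>N. 1 - 4 / (\<epsilon>^2 * real N))"
      by (simp only: divide_divide_eq_left)
    ultimately show ?thesis by (simp only: diff_zero)
  qed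
  have e12: "eventually (\<lambda>N. 1 - 4 / (\<epsilon>^2 * real N) \<le> fidelity W P Pm M \<mu> \<alpha>A N (\<Sigma> N)) sequentially \<and>
     eventually (\<lambda>N. fidelity W P Pm M \<mu> \<alpha>A N (\<Sigma> N) \<le> 1) sequentially"
    using ev by (simp only: eventually_conj_iff)
  have conv: "(\<lambda>N. fidelity W P Pm M \<mu> \<alpha>A N (\<Sigma> N)) \<longlonglongrightarrow> 1"
    using tendsto_sandwich[OF conjunct1[OF e12] conjunct2[OF e12] lim tendsto_const] .
  show ?thesis by (rule exI[of _ \<Sigma>], rule conjI[OF reg conv])
qed


end
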